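(* The Oracle Mechanism is almost budget feasible: there is a function $\varepsilon(\theta)\ge0$ depending only on $\theta$, with $\varepsilon(\theta)\to0$ as $\theta\to0$, such that on every instance with largeness ratio $\theta$ the total payment $\sum_{j=1}^k2r_{x_j}\partial_j$ is at most $(1+\varepsilon(\theta))B$.
   Context: Sellers $S=\{1,\dots,n\}$ each own one indivisible item and have a cost $c_i\ge0$. The buyer's utility is a monotone submodular $F:2^S\to\mathbb R_{\ge0}$, budget $B>0$; $c(T)=\sum_{i\in T}c_i$. $F^\star=\max\{F(T):c(T)\le B\}>0$; the largeness ratio is $\theta=\max_sF(\{s\})/F^\star$. Greedy sequence $\chi(F)=\langle x_1,\dots,x_n\rangle$: with $\chi_0=\emptyset$, $\chi_i=\{x_1,\dots,x_i\}$, $x_i$ maximizes $(F(\chi_{i-1}\cup\{s\})-F(\chi_{i-1}))/c_s$ over $s\notin\chi_{i-1}$ (ratio $+\infty$ if $c_s=0$; ties arbitrary); $\partial_i=F(\chi_i)-F(\chi_{i-1})$. Oracle Mechanism: compute $F^\star$, construct $\chi(F)$, let $k$ be the largest integer with $F(\chi_k)\le F^\star/2$, declare $\chi_k$ the winners, and pay each winner $x_j$ the amount $2r_{x_j}\partial_j$, where $r_s=B/F^\star_s$ and $F^\star_s=\max\{F(T):T\subseteq S\setminus\{s\},c(T)\le B\}$. *)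

theory Defs
  imports Complex_Main "HOL-Library.Extended_Real"
begin

text \<open>Sellers are S = {1..n}; costs c :: nat => real; utility F :: nat set => real.\<close>

definition cost :: "(nat \<Rightarrow> real) \<Rightarrow> nat set \<Rightarrow> real" where
  "cost c T = (\<Sum>i\<in>T. c i)"

definition monotone_submodular :: "nat set \<Rightarrow> (nat set \<Rightarrow> real) \<Rightarrow> bool" where
  "monotone_submodular S F \<longleftrightarrow>
     (\<forall>T. T \<subseteq> S \<longrightarrow> F T \<ge> 0) \<and>
     (\<forall>A B. A \<subseteq> B \<and> B \<subseteq> S \<longrightarrow> F A \<le> F B) \<and>
     (\<forall>A B. A \<subseteq> S \<and> B \<subseteq> S \<longrightarrow> F (A \<union> B) + F (A \<inter> B) \<le> F A + F B)"

definition opt :: "nat set \<Rightarrow> (nat \<Rightarrow> real) \<Rightarrow> real \<Rightarrow> (nat set \<Rightarrow> real) \<Rightarrow> real" where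
  "opt U c B F = Max {F T | T. T \<subseteq> U \<and> cost c T \<le> B}"

definition largeness :: "nat set \<Rightarrow> (nat \<Rightarrow> real) \<Rightarrow> real \<Rightarrow> (nat set \<Rightarrow> real) \<Rightarrow> real" where
  "largeness S c B F = Max ((\<lambda>s. F {s}) ` S) / opt S c B F"

definition chi :: "(nat \<Rightarrow> nat) \<Rightarrow> nat \<Rightarrow> nat set" where
  "chi x i = x ` {1..i}"

definition gain_ratio :: "(nat \<Rightarrow> real) \<Rightarrow> (nat set \<Rightarrow> real) \<Rightarrow> nat set \<Rightarrow> nat \<Rightarrow> ereal" where
  "gain_ratio c F T s = (if c s = 0 then \<infinity> else ereal ((F (T \<union> {s}) - F T) / c s))"

definition greedy_seq :: "nat \<Rightarrow> (nat \<Rightarrow> real) \<Rightarrow> (nat set \<Rightarrow> real) \<Rightarrow> (nat \<Rightarrow> nat) \<Rightarrow> bool" where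
  "greedy_seq n c F x \<longleftrightarrow>
     (\<forall>i\<in>{1..n}. x i \<in> {1..n} - chi x (i - 1) \<and>
        (\<forall>s \<in> {1..n} - chi x (i - 1).
            gain_ratio c F (chi x (i - 1)) s \<le> gain_ratio c F (chi x (i - 1)) (x i)))"

definition marginal :: "(nat set \<Rightarrow> real) \<Rightarrow> (nat \<Rightarrow> nat) \<Rightarrow> nat \<Rightarrow> real" where
  "marginal F x i = F (chi x i) - F (chi x (i - 1))"

definition rate :: "nat set \<Rightarrow> (nat \<Rightarrow> real) \<Rightarrow> real \<Rightarrow> (nat set \<Rightarrow> real) \<Rightarrow> nat \<Rightarrow> real" where
  "rate S c B F s = B / opt (S - {s}) c B F"

definition oracle_k :: "nat \<Rightarrow> (nat \<Rightarrow> real) \<Rightarrow> real \<Rightarrow> (nat set \<Rightarrow> real) \<Rightarrow> (nat \<Rightarrow> nat) \<Rightarrow> nat \<Rightarrow> bool" where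
  "oracle_k n c B F x k \<longleftrightarrow>
     k \<le> n \<and> F (chi x k) \<le> opt {1..n} c B F / 2 \<and>
     (\<forall>j. j \<le> n \<and> F (chi x j) \<le> opt {1..n} c B F / 2 \<longrightarrow> j \<le> k)"

definition oracle_payment :: "nat \<Rightarrow> (nat \<Rightarrow> real) \<Rightarrow> real \<Rightarrow> (nat set \<Rightarrow> real) \<Rightarrow> (nat \<Rightarrow> nat) \<Rightarrow> nat \<Rightarrow> real" where
  "oracle_payment n c B F x k = (\<Sum>j=1..k. 2 * rate {1..n} c B F (x j) * marginal F x j)"

end

theory Submission
  imports Defs
begin

lemma opt_fin: "finite U \<Longrightarrow> finite {F T | T. T \<subseteq> U \<and> cost c T \<le> B}"
proof -
  assume "finite U"
  have "{F T | T. T \<subseteq> U \<and> cost c T \<le> B} \<subseteq> F ` Pow U" by auto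
  thus ?thesis using \<open>finite U\<close> finite_subset by blast
qed

lemma opt_ne: "B \<ge> 0 \<Longrightarrow> {F T | T. T \<subseteq> U \<and> cost c T \<le> B} \<noteq> {}"
  by (rule ccontr) (auto simp: cost_def)

lemma opt_ge: "finite U \<Longrightarrow> T \<subseteq> U \<Longrightarrow> cost c T \<le> B \<Longrightarrow> F T \<le> opt U c B F"
  unfolding opt_def by (rule Max_ge[OF opt_fin]) auto

lemma opt_attained: "finite U \<Longrightarrow> B \<ge> 0 \<Longrightarrow> \<exists>T. T \<subseteq> U \<and> cost c T \<le> B \<and> F T = opt U c B F"
proof -
  assume a: "finite U" "B \<ge> 0"
  have "opt U c B F \<in> {F T | T. T \<subseteq> U \<and> cost c T \<le> B}"
    unfolding opt_def by (rule Max_in[OF opt_fin[OF a(1)] opt_ne[OF a(2)]])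
  thus ?thesis by auto
qed

lemma telesc: "(\<Sum>j=1..k. (f j - f (j - 1))) = f k - (f 0 :: real)" for k :: nat
  by (induct k) auto

lemma eps_lim: "((\<lambda>t::real. 1 / max (1/2) (1 - \<bar>t\<bar>) - 1) \<longlongrightarrow> 0) (at_right 0)"
proof -
  have "((\<lambda>t::real. 1 / max (1/2) (1 - \<bar>t\<bar>) - 1) \<longlongrightarrow> 1 / max (1/2) (1 - \<bar>0\<bar>) - 1) (at 0)"
    by (intro tendsto_intros) auto
  hence "((\<lambda>t::real. 1 / max (1/2) (1 - \<bar>t\<bar>) - 1) \<longlongrightarrow> 0) (at 0)" by simp
  thus ?thesis by (rule tendsto_mono[OF at_le, rotated]) simp
qed

theorem lemma18:
  "\<exists>\<epsilon> :: real \<Rightarrow> real. (\<forall>\<theta>. \<epsilon> \<theta> \<ge> 0) \<and> (\<epsilon> \<longlongrightarrow> 0) (at_right 0) \<and>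
     (\<forall>(n::nat) (c::nat \<Rightarrow> real) (F::nat set \<Rightarrow> real) (B::real) (x::nat \<Rightarrow> nat) (k::nat).
        (\<forall>i\<in>{1..n}. c i \<ge> 0) \<and> B > 0 \<and> monotone_submodular {1..n} F \<and>
        opt {1..n} c B F > 0 \<and> greedy_seq n c F x \<and> oracle_k n c B F x k
        \<longrightarrow> oracle_payment n c B F x k \<le> (1 + \<epsilon> (largeness {1..n} c B F)) * B)"
proof (intro exI[of _ "\<lambda>t::real. 1 / max (1/2) (1 - \<bar>t\<bar>) - 1"] conjI allI impI)
  fix t :: real show "0 \<le> 1 / max (1/2) (1 - \<bar>t\<bar>) - 1" by (simp add: field_simps)
next
  show "((\<lambda>t::real. 1 / max (1/2) (1 - \<bar>t\<bar>) - 1) \<longlongrightarrow> 0) (at_right 0)" by (rule eps_lim)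
next
  fix n :: nat and c :: "nat \<Rightarrow> real" and F :: "nat set \<Rightarrow> real" and B :: real and x :: "nat \<Rightarrow> nat" and k :: nat
  assume H: "(\<forall>i\<in>{1..n}. c i \<ge> 0) \<and> B > 0 \<and> monotone_submodular {1..n} F \<and>
        opt {1..n} c B F > 0 \<and> greedy_seq n c F x \<and> oracle_k n c B F x k"
  define S where "S = {1..n}"
  define Fs where "Fs = opt S c B F"
  define th where "th = largeness S c B F"
  define m where "m = max (1/2) (1 - \<bar>th\<bar>)"
  have c0: "\<forall>i\<in>S. c i \<ge> 0" and Bp: "B > 0" and Fsp: "Fs > 0"
    using H by (auto simp: S_def Fs_def)
  have nn: "\<And>T. T \<subseteq> S \<Longrightarrow> F T \<ge> 0" and mono: "\<And>A C. A \<subseteq> C \<Longrightarrow> C \<subseteq> S \<Longrightarrow> F A \<le> F C"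
    and sub: "\<And>A C. A \<subseteq> S \<Longrightarrow> C \<subseteq> S \<Longrightarrow> F (A \<union> C) + F (A \<inter> C) \<le> F A + F C"
    using H unfolding monotone_submodular_def S_def by blast+
  have xin: "\<And>i. i \<in> {1..n} \<Longrightarrow> x i \<in> S" using H unfolding greedy_seq_def S_def by blast
  have kn: "k \<le> n" and kF: "F (chi x k) \<le> Fs / 2" using H unfolding oracle_k_def S_def Fs_def by auto
  have chisub: "\<And>j. j \<le> n \<Longrightarrow> chi x j \<subseteq> S" using xin unfolding chi_def by auto
  have chimono: "\<And>i j. i \<le> j \<Longrightarrow> chi x i \<subseteq> chi x j" unfolding chi_def by auto
  have finS: "finite S" by (simp add: S_def)
  obtain Ts where Ts: "Ts \<subseteq> S" "cost c Ts \<le> B" "F Ts = Fs"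
    using opt_attained[OF finS, of B c F] Bp by (auto simp: Fs_def)
  have mpos: "m > 0" by (simp add: m_def)
  have rate_le: "rate S c B F (x j) \<le> B / (Fs * m)" if j: "j \<in> {1..k}" for j
  proof -
    let ?s = "x j"
    have sS: "?s \<in> S" using xin j kn by auto
    have "{?s} \<subseteq> chi x k" using j unfolding chi_def by auto
    hence Fs1: "F {?s} \<le> Fs / 2" using mono chisub[OF kn] kF by (meson order_trans)
    have "Max ((\<lambda>s. F {s}) ` S) \<ge> F {?s}" using finS sS by (intro Max_ge) auto
    hence "F {?s} \<le> th * Fs" unfolding th_def largeness_def Fs_def using Fsp by (simp add: Fs_def)
    hence Fs2: "F {?s} \<le> \<bar>th\<bar> * Fs" using Fsp
      by (smt (verit) abs_ge_self mult_right_mono)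
    let ?A = "Ts - {?s}"
    have cA: "cost c ?A \<le> B"
    proof -
      have "cost c ?A \<le> cost c Ts" unfolding cost_def
        using Ts(1) c0 finS by (intro sum_mono2) (auto intro: finite_subset)
      thus ?thesis using Ts(2) by simp
    qed
    have fin2: "finite (S - {?s})" using finS by simp
    have opt2: "F ?A \<le> opt (S - {?s}) c B F" using Ts(1) cA by (intro opt_ge[OF fin2]) auto
    have "F (?A \<union> {?s}) + F (?A \<inter> {?s}) \<le> F ?A + F {?s}" using Ts(1) sS by (intro sub) auto
    moreover have "?A \<inter> {?s} = {}" by auto
    moreover have "F {} \<ge> 0" using nn by auto
    moreover have "F Ts \<le> F (?A \<union> {?s})" using Ts(1) sS by (intro mono) auto
    ultimately have "Fs \<le> opt (S - {?s}) c B F + F {?s}" using opt2 Ts(3) by auto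
    hence "Fs * m \<le> opt (S - {?s}) c B F" using Fs1 Fs2 unfolding m_def
      by (auto simp: max_def algebra_simps split: if_splits)
    moreover have "Fs * m > 0" using Fsp mpos by simp
    ultimately show ?thesis unfolding rate_def using Bp
      by (intro divide_left_mono) auto
  qed
  have marg_nn: "marginal F x j \<ge> 0" if "j \<in> {1..k}" for j
    unfolding marginal_def using that kn chisub chimono by (intro diff_ge_0_iff_ge[THEN iffD2] mono) auto
  have "oracle_payment n c B F x k = (\<Sum>j=1..k. 2 * rate S c B F (x j) * marginal F x j)"
    unfolding oracle_payment_def S_def by simp
  also have "\<dots> \<le> (\<Sum>j=1..k. 2 * (B / (Fs * m)) * marginal F x j)"
    using rate_le marg_nn by (intro sum_mono mult_right_mono) (auto simp del: times_divide_eq_right)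
  also have "\<dots> = 2 * (B / (Fs * m)) * (F (chi x k) - F (chi x 0))"
    unfolding marginal_def sum_distrib_left[symmetric] using telesc[of "\<lambda>j. F (chi x j)" k] by simp
  also have "\<dots> \<le> 2 * (B / (Fs * m)) * (Fs / 2)"
  proof -
    have "chi x 0 = {}" unfolding chi_def by auto
    hence "F (chi x 0) \<ge> 0" using nn by auto
    moreover have "B / (Fs * m) \<ge> 0" using Bp Fsp mpos by simp
    ultimately show ?thesis using kF by (intro mult_left_mono) auto
  qed
  also have "\<dots> = (1 + (1 / m - 1)) * B" using Fsp mpos by (simp add: field_simps)
  finally show "oracle_payment n c B F x k \<le> (1 + (1 / max (1/2) (1 - \<bar>largeness {1..n} c B F\<bar>) - 1)) * B"
    unfolding m_def th_def S_def .
qed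

end
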